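(* Let $\alpha>0$ and let $a_1,\dots,a_N,b_1,\dots,b_{N-1}$ be independent with $a_i\sim\mathcal N(0,\alpha)$, $b_i\ge0$, $b_i^2\sim\frac\alpha2\chi^2(2i/\alpha)$; let $c_i=(b_i^2-i)/\sqrt i$. Let $\theta_N>1$ and for $1\le i\le N$ let $r_i=1+\sqrt{1-\frac{i-1}{N\theta_N^2}}$, $m_i=1-\sqrt{1-\frac{i-1}{N\theta_N^2}}$, $\gamma_i=m_i/r_i$; for $3\le i\le N$ let $\xi_i=\frac{a_i}{\sqrt N\theta_Nr_i}+\sqrt{\frac{m_i}{r_i}}\frac{c_{i-1}}{\sqrt N\theta_Nr_{i-1}}$, and let $L_2=0$, $L_i=\xi_i+\gamma_iL_{i-1}$. Then for any $3\le i\le N$, $L_i\in SG(v_{Li},u_{Li})$ with \[ v_{Li}=\frac{\alpha}{2N\theta_N^2(r_i-1)},\qquad u_{Li}=\frac{\alpha}{N\theta_N^2r_i^2}. \]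
   Context: For $d>0$, $\chi^2(d)$ has density $\frac{1}{2^{d/2}\Gamma(d/2)}x^{d/2-1}e^{-x/2}\mathbf 1_{x>0}$. A centred random variable $X$ belongs to the sub-gamma family $SG(v,u)$ ($v>0$, $u\ge0$) if $\mathbf E e^{tX}\le\exp\!\big(\frac{t^2v}{2(1-u|t|)}\big)$ for all $t$ with $|t|<1/u$ (all $t\in\mathbb R$ if $u=0$). *)

theory Defs
  imports "HOL-Probability.Probability"
begin

definition chi2_density :: "real \<Rightarrow> real \<Rightarrow> real" where
  "chi2_density d x = (if x > 0 then
     1 / (2 powr (d/2) * Gamma (d/2)) * x powr (d/2 - 1) * exp (-x/2) else 0)"

definition sub_gamma :: "'a measure \<Rightarrow> ('a \<Rightarrow> real) \<Rightarrow> real \<Rightarrow> real \<Rightarrow> bool" where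
  "sub_gamma M X v u \<longleftrightarrow> v > 0 \<and> u \<ge> 0 \<and>
     integrable M X \<and> (\<integral>x. X x \<partial>M) = 0 \<and>
     (\<forall>t::real. (u = 0 \<or> \<bar>t\<bar> < 1/u) \<longrightarrow>
        (\<integral>\<^sup>+x. ennreal (exp (t * X x)) \<partial>M) \<le> ennreal (exp (t^2 * v / (2 * (1 - u * \<bar>t\<bar>)))))"

definition r_coef :: "nat \<Rightarrow> real \<Rightarrow> nat \<Rightarrow> real" where
  "r_coef N \<theta> i = 1 + sqrt (1 - real (i - 1) / (real N * \<theta>^2))"

definition m_coef :: "nat \<Rightarrow> real \<Rightarrow> nat \<Rightarrow> real" where
  "m_coef N \<theta> i = 1 - sqrt (1 - real (i - 1) / (real N * \<theta>^2))"

definition gamma_coef :: "nat \<Rightarrow> real \<Rightarrow> nat \<Rightarrow> real" where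
  "gamma_coef N \<theta> i = m_coef N \<theta> i / r_coef N \<theta> i"

definition c_var :: "(nat \<Rightarrow> 'a \<Rightarrow> real) \<Rightarrow> nat \<Rightarrow> 'a \<Rightarrow> real" where
  "c_var b i \<omega> = ((b i \<omega>)^2 - real i) / sqrt (real i)"

definition xi_var :: "nat \<Rightarrow> real \<Rightarrow> (nat \<Rightarrow> 'a \<Rightarrow> real) \<Rightarrow> (nat \<Rightarrow> 'a \<Rightarrow> real) \<Rightarrow> nat \<Rightarrow> 'a \<Rightarrow> real" where
  "xi_var N \<theta> a b i \<omega> =
     a i \<omega> / (sqrt (real N) * \<theta> * r_coef N \<theta> i)
     + sqrt (m_coef N \<theta> i / r_coef N \<theta> i) *
       (c_var b (i - 1) \<omega> / (sqrt (real N) * \<theta> * r_coef N \<theta> (i - 1)))"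

text \<open>L_2 = 0 (and, by convention, L_i = 0 for i \<le> 2), L_i = \<xi>_i + \<gamma>_i L_{i-1} for i \<ge> 3.\<close>
fun L_var :: "nat \<Rightarrow> real \<Rightarrow> (nat \<Rightarrow> 'a \<Rightarrow> real) \<Rightarrow> (nat \<Rightarrow> 'a \<Rightarrow> real) \<Rightarrow> nat \<Rightarrow> 'a \<Rightarrow> real" where
  "L_var N \<theta> a b 0 = (\<lambda>\<omega>. 0)"
| "L_var N \<theta> a b (Suc n) = (if Suc n \<le> 2 then (\<lambda>\<omega>. 0) else
     (\<lambda>\<omega>. xi_var N \<theta> a b (Suc n) \<omega> + gamma_coef N \<theta> (Suc n) * L_var N \<theta> a b n \<omega>))"

end

theory Submission
  imports Defs
begin

lemma cond_lt: fixes u t :: real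
  assumes "u \<ge> 0" "u = 0 \<or> \<bar>t\<bar> < 1/u" shows "u * \<bar>t\<bar> < 1"
proof (cases "u = 0")
  case False thus ?thesis using assms by (simp add: pos_less_divide_eq mult.commute)
qed simp

lemma sg_zero:
  assumes "prob_space M" "v > 0" "u \<ge> 0"
  shows "sub_gamma M (\<lambda>_. 0) v u"
proof -
  interpret prob_space M by fact
  show ?thesis unfolding sub_gamma_def using assms cond_lt[of u]
    by (auto simp: emeasure_space_1 intro!: divide_nonneg_pos mult_nonneg_nonneg)
qed

lemma indep_nn_mult:
  assumes "prob_space M" "prob_space.indep_var M borel X borel Y"
    and [measurable]: "f \<in> borel_measurable borel" "g \<in> borel_measurable borel"
  shows "(\<integral>\<^sup>+\<omega>. (f (X \<omega>) :: ennreal) * g (Y \<omega>) \<partial>M) = (\<integral>\<^sup>+\<omega>. f (X \<omega>) \<partial>M) * (\<integral>\<^sup>+\<omega>. g (Y \<omega>) \<partial>M)"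
proof -
  interpret prob_space M by fact
  have ind: "indep_var borel (f \<circ> X) borel (g \<circ> Y)"
    by (rule indep_var_compose[OF assms(2)]) auto
  let ?Z = "case_bool (f \<circ> X) (g \<circ> Y)"
  have "indep_vars (\<lambda>_. borel) ?Z UNIV"
    using ind unfolding indep_var_def
    by (rule indep_vars_cong[THEN iffD1, rotated 3]) (auto split: bool.split)
  from indep_vars_nn_integral[OF _ this] have
    "(\<integral>\<^sup>+\<omega>. (\<Prod>i\<in>UNIV. ?Z i \<omega>) \<partial>M) = (\<Prod>i\<in>UNIV. \<integral>\<^sup>+\<omega>. ?Z i \<omega> \<partial>M)" by simp
  then show ?thesis by (simp add: UNIV_bool mult.commute o_def)
qed

lemma exp_bound_scale:
  fixes t c v1 u1 v u :: real
  assumes "u1 \<ge> 0" "v1 \<ge> 0" "\<bar>c\<bar> * u1 \<le> u" "u * \<bar>t\<bar> < 1"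
  shows "exp ((t*c)^2 * v1 / (2 * (1 - u1 * \<bar>t*c\<bar>))) \<le> exp (t^2 * (c^2 * v1) / (2 * (1 - u * \<bar>t\<bar>)))"
proof -
  have "u1 * \<bar>t*c\<bar> = (\<bar>c\<bar> * u1) * \<bar>t\<bar>" by (simp add: abs_mult)
  also have "\<dots> \<le> u * \<bar>t\<bar>" using assms by (intro mult_right_mono) auto
  finally have d: "0 < 2 * (1 - u * \<bar>t\<bar>)" "2 * (1 - u * \<bar>t\<bar>) \<le> 2 * (1 - u1 * \<bar>t*c\<bar>)"
    using assms by auto
  have "(t*c)^2 * v1 / (2 * (1 - u1 * \<bar>t*c\<bar>)) \<le> (t*c)^2 * v1 / (2 * (1 - u * \<bar>t\<bar>))"
    by (rule divide_left_mono) (use d assms in auto)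
  then show ?thesis by (simp add: power_mult_distrib mult.assoc)
qed

lemma sg_comb:
  assumes P: "prob_space M" and X: "sub_gamma M X v1 u1" and Y: "sub_gamma M Y v2 u2"
    and ind: "prob_space.indep_var M borel X borel Y"
    and v: "c1^2 * v1 + c2^2 * v2 \<le> v" "v > 0"
    and u: "\<bar>c1\<bar> * u1 \<le> u" "\<bar>c2\<bar> * u2 \<le> u"
  shows "sub_gamma M (\<lambda>\<omega>. c1 * X \<omega> + c2 * Y \<omega>) v u"
proof -
  interpret prob_space M by fact
  have X': "v1 > 0" "u1 \<ge> 0" "integrable M X" "(\<integral>x. X x \<partial>M) = 0"
    "\<And>t. u1 = 0 \<or> \<bar>t\<bar> < 1/u1 \<Longrightarrow> (\<integral>\<^sup>+x. ennreal (exp (t * X x)) \<partial>M) \<le> ennreal (exp (t^2 * v1 / (2 * (1 - u1 * \<bar>t\<bar>))))"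
    using X unfolding sub_gamma_def by auto
  have Y': "v2 > 0" "u2 \<ge> 0" "integrable M Y" "(\<integral>x. Y x \<partial>M) = 0"
    "\<And>t. u2 = 0 \<or> \<bar>t\<bar> < 1/u2 \<Longrightarrow> (\<integral>\<^sup>+x. ennreal (exp (t * Y x)) \<partial>M) \<le> ennreal (exp (t^2 * v2 / (2 * (1 - u2 * \<bar>t\<bar>))))"
    using Y unfolding sub_gamma_def by auto
  have u0: "u \<ge> 0" using u X'(2) by (meson abs_ge_zero order_trans zero_le_mult_iff)
  have cnd: "w = 0 \<or> \<bar>s\<bar> < 1/w" if "w \<ge> 0" "w * \<bar>s\<bar> < 1" for w s :: real
    using that by (cases "w = 0") (auto simp: pos_less_divide_eq mult.commute)
  show ?thesis unfolding sub_gamma_def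
  proof (intro conjI allI impI)
    show "integrable M (\<lambda>\<omega>. c1 * X \<omega> + c2 * Y \<omega>)" using X'(3) Y'(3) by auto
    show "(\<integral>\<omega>. c1 * X \<omega> + c2 * Y \<omega> \<partial>M) = 0" using X'(3,4) Y'(3,4) by simp
    fix t :: real assume "u = 0 \<or> \<bar>t\<bar> < 1/u"
    hence ut: "u * \<bar>t\<bar> < 1" using cond_lt u0 by blast
    have h1: "u1 * \<bar>t*c1\<bar> < 1"
    proof -
      have "u1 * \<bar>t*c1\<bar> = (\<bar>c1\<bar> * u1) * \<bar>t\<bar>" by (simp add: abs_mult)
      also have "\<dots> \<le> u * \<bar>t\<bar>" using u by (intro mult_right_mono) auto
      finally show ?thesis using ut by simp
    qed
    have h2: "u2 * \<bar>t*c2\<bar> < 1"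
    proof -
      have "u2 * \<bar>t*c2\<bar> = (\<bar>c2\<bar> * u2) * \<bar>t\<bar>" by (simp add: abs_mult)
      also have "\<dots> \<le> u * \<bar>t\<bar>" using u by (intro mult_right_mono) auto
      finally show ?thesis using ut by simp
    qed
    have mX[measurable]: "X \<in> borel_measurable M" using X'(3) by auto
    have mY[measurable]: "Y \<in> borel_measurable M" using Y'(3) by auto
    have "(\<integral>\<^sup>+x. ennreal (exp (t * (c1 * X x + c2 * Y x))) \<partial>M)
        = (\<integral>\<^sup>+x. ennreal (exp ((t*c1) * X x)) * ennreal (exp ((t*c2) * Y x)) \<partial>M)"
      by (intro nn_integral_cong) (simp add: ennreal_mult[symmetric] exp_add[symmetric] algebra_simps)
    also have "\<dots> = (\<integral>\<^sup>+x. ennreal (exp ((t*c1) * X x)) \<partial>M) * (\<integral>\<^sup>+x. ennreal (exp ((t*c2) * Y x)) \<partial>M)"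
      by (rule indep_nn_mult[OF P ind, of "\<lambda>x. ennreal (exp ((t*c1) * x))" "\<lambda>x. ennreal (exp ((t*c2) * x))"]) auto
    also have "\<dots> \<le> ennreal (exp ((t*c1)^2 * v1 / (2 * (1 - u1 * \<bar>t*c1\<bar>)))) * ennreal (exp ((t*c2)^2 * v2 / (2 * (1 - u2 * \<bar>t*c2\<bar>))))"
      by (intro mult_mono X'(5) Y'(5) cnd h1 h2 X'(2) Y'(2)) auto
    also have "\<dots> \<le> ennreal (exp (t^2 * (c1^2 * v1) / (2 * (1 - u * \<bar>t\<bar>)))) * ennreal (exp (t^2 * (c2^2 * v2) / (2 * (1 - u * \<bar>t\<bar>))))"
      by (intro mult_mono ennreal_leI exp_bound_scale X'(1,2) Y'(1,2) u ut less_imp_le) auto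
    also have "\<dots> = ennreal (exp (t^2 * (c1^2 * v1 + c2^2 * v2) / (2 * (1 - u * \<bar>t\<bar>))))"
      by (simp add: ennreal_mult[symmetric] exp_add[symmetric] add_divide_distrib distrib_left)
    also have "\<dots> \<le> ennreal (exp (t^2 * v / (2 * (1 - u * \<bar>t\<bar>))))"
      using ut v by (intro ennreal_leI) (auto intro!: divide_right_mono mult_left_mono)
    finally show "(\<integral>\<^sup>+x. ennreal (exp (t * (c1 * X x + c2 * Y x))) \<partial>M) \<le> ennreal (exp (t^2 * v / (2 * (1 - u * \<bar>t\<bar>))))" .
  qed (use v u0 in auto)
qed

lemma sg_normal:
  assumes P: "prob_space M" and a: "\<alpha> > 0"
    and D: "distributed M lborel X (normal_density 0 (sqrt \<alpha>))"
  shows "sub_gamma M X \<alpha> 0"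
proof -
  interpret prob_space M by fact
  have s: "sqrt \<alpha> > 0" using a by simp
  have [measurable]: "X \<in> borel_measurable M" using D by (auto dest: distributed_measurable)
  have int: "integrable M X"
    by (rule distributed_integrable_var[OF D]) (auto intro: integrable_normal_moment_nz_1[OF s])
  have mean: "(\<integral>x. X x \<partial>M) = 0" using normal_distributed_expectation[OF s D] .
  have mgf: "(\<integral>\<^sup>+x. ennreal (exp (t * X x)) \<partial>M) = ennreal (exp (t^2 * \<alpha> / 2))" for t
  proof -
    have "(\<integral>\<^sup>+x. ennreal (exp (t * X x)) \<partial>M) = (\<integral>\<^sup>+x. ennreal (normal_density 0 (sqrt \<alpha>) x) * ennreal (exp (t * x)) \<partial>lborel)"
      by (rule distributed_nn_integral[OF D, symmetric]) auto
    also have "\<dots> = (\<integral>\<^sup>+x. ennreal (exp (t^2 * \<alpha> / 2)) * ennreal (normal_density (t * \<alpha>) (sqrt \<alpha>) x) \<partial>lborel)"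
    proof (intro nn_integral_cong)
      fix x :: real
      have "normal_density 0 (sqrt \<alpha>) x * exp (t * x) = exp (t^2 * \<alpha> / 2) * normal_density (t * \<alpha>) (sqrt \<alpha>) x"
        using a unfolding normal_density_def
        by (simp add: mult_exp_exp power2_eq_square field_simps)
      then show "ennreal (normal_density 0 (sqrt \<alpha>) x) * ennreal (exp (t * x)) = ennreal (exp (t^2 * \<alpha> / 2)) * ennreal (normal_density (t * \<alpha>) (sqrt \<alpha>) x)"
        by (simp add: ennreal_mult[symmetric])
    qed
    also have "\<dots> = ennreal (exp (t^2 * \<alpha> / 2)) * (\<integral>\<^sup>+x. ennreal (normal_density (t * \<alpha>) (sqrt \<alpha>) x) \<partial>lborel)"
      by (rule nn_integral_cmult) auto
    also have "(\<integral>\<^sup>+x. ennreal (normal_density (t * \<alpha>) (sqrt \<alpha>) x) \<partial>lborel) = 1"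
    proof -
      interpret N: prob_space "density lborel (normal_density (t * \<alpha>) (sqrt \<alpha>))"
        by (rule prob_space_normal_density) (use s in auto)
      show ?thesis using N.emeasure_space_1 by (simp add: emeasure_density)
    qed
    finally show ?thesis by simp
  qed
  show ?thesis unfolding sub_gamma_def using a int mean mgf by auto
qed

lemma gamma_nn1:
  fixes k :: real assumes k: "k > 0"
  shows "(\<integral>\<^sup>+x. ennreal (indicator {0<..} x * x powr (k-1) * exp (- x)) \<partial>lborel) = ennreal (Gamma k)"
proof -
  have "(\<integral>\<^sup>+x. ennreal (indicator {0..} x * (x powr (k-1) / exp x)) \<partial>lborel) = ennreal (Gamma k)"
    by (rule nn_integral_has_integral_lebesgue[OF _ Gamma_integral_real[OF k]]) auto
  also have "(\<lambda>x. ennreal (indicator {0..} x * (x powr (k-1) / exp x))) = (\<lambda>x::real. ennreal (indicator {0<..} x * x powr (k-1) * exp (- x)))"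
    by (rule ext) (auto simp: indicator_def exp_minus field_simps)
  finally show ?thesis .
qed

lemma gamma_nn:
  fixes k l :: real assumes k: "k > 0" and l: "l > 0"
  shows "(\<integral>\<^sup>+x. ennreal (indicator {0<..} x * x powr (k-1) * exp (- (l * x))) \<partial>lborel) = ennreal (Gamma k / l powr k)"
proof -
  let ?h = "\<lambda>x::real. ennreal (indicator {0<..} x * x powr (k-1) * exp (- (l * x)))"
  have "(\<integral>\<^sup>+x. ?h x \<partial>lborel) = \<bar>1/l\<bar> * (\<integral>\<^sup>+x. ?h (0 + (1/l) * x) \<partial>lborel)"
    by (rule nn_integral_real_affine) (use l in auto)
  also have "(\<lambda>x. ?h (0 + (1/l) * x)) = (\<lambda>x. ennreal (l powr (1 - k)) * ennreal (indicator {0<..} x * x powr (k-1) * exp (- x)))"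
  proof (rule ext)
    fix x :: real
    show "?h (0 + (1/l) * x) = ennreal (l powr (1 - k)) * ennreal (indicator {0<..} x * x powr (k-1) * exp (- x))"
    proof (cases "x > 0")
      case True
      have "(x / l) powr (k - 1) = l powr (1 - k) * x powr (k - 1)"
        using True l by (simp add: powr_divide powr_minus_divide[symmetric] powr_diff divide_simps)
      then show ?thesis using True l
        by (simp add: ennreal_mult[symmetric] indicator_def)
    next
      case False then show ?thesis using l by (simp add: indicator_def zero_less_mult_iff zero_less_divide_iff)
    qed
  qed
  also have "(\<integral>\<^sup>+x. ennreal (l powr (1 - k)) * ennreal (indicator {0<..} x * x powr (k-1) * exp (- x)) \<partial>lborel)
     = ennreal (l powr (1 - k)) * ennreal (Gamma k)"
    by (subst nn_integral_cmult) (auto simp: gamma_nn1[OF k])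
  also have "ennreal \<bar>1/l\<bar> * (ennreal (l powr (1 - k)) * ennreal (Gamma k)) = ennreal (Gamma k / l powr k)"
    using l k by (simp add: ennreal_mult[symmetric] powr_diff Gamma_real_pos field_simps)
  finally show ?thesis by simp
qed

lemma chi2_nonneg: "d > 0 \<Longrightarrow> chi2_density d x \<ge> 0"
  by (simp add: chi2_density_def Gamma_real_pos)

lemma chi2_mgf:
  fixes d s :: real assumes d: "d > 0" and s: "s < 1/2"
  shows "(\<integral>\<^sup>+x. ennreal (chi2_density d x) * ennreal (exp (s * x)) \<partial>lborel) = ennreal ((1 - 2 * s) powr (-(d/2)))"
proof -
  define k where "k = d/2"
  have k: "k > 0" using d by (simp add: k_def)
  define C where "C = 1 / (2 powr k * Gamma k)"
  have C: "C > 0" using k by (simp add: C_def Gamma_real_pos)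
  have "(\<lambda>x. ennreal (chi2_density d x) * ennreal (exp (s * x))) = (\<lambda>x. ennreal C * ennreal (indicator {0<..} x * x powr (k-1) * exp (- ((1/2 - s) * x))))"
  proof (rule ext)
    fix x :: real
    show "ennreal (chi2_density d x) * ennreal (exp (s * x)) = ennreal C * ennreal (indicator {0<..} x * x powr (k-1) * exp (- ((1/2 - s) * x)))"
    proof (cases "x > 0")
      case True
      have e: "exp (-x/2) * exp (s * x) = exp (- ((1/2 - s) * x))"
        by (simp add: exp_add[symmetric] algebra_simps)
      have "chi2_density d x * exp (s * x) = C * x powr (k-1) * (exp (-x/2) * exp (s * x))"
        using True unfolding chi2_density_def C_def k_def by simp
      also have "\<dots> = C * (x powr (k-1) * exp (- ((1/2 - s) * x)))" by (simp only: e mult.assoc)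
      finally have eq: "chi2_density d x * exp (s * x) = C * (x powr (k-1) * exp (- ((1/2 - s) * x)))" .
      have "ennreal (chi2_density d x) * ennreal (exp (s * x)) = ennreal (chi2_density d x * exp (s * x))"
        using chi2_nonneg[OF d] by (simp add: ennreal_mult)
      then show ?thesis using True C eq
        by (simp add: ennreal_mult[symmetric] indicator_def)
    qed (simp add: chi2_density_def)
  qed
  then have "(\<integral>\<^sup>+x. ennreal (chi2_density d x) * ennreal (exp (s * x)) \<partial>lborel)
     = ennreal C * ennreal (Gamma k / (1/2 - s) powr k)"
    using gamma_nn[OF k, of "1/2 - s"] s by (simp add: nn_integral_cmult)
  also have "\<dots> = ennreal ((1 - 2 * s) powr (-(d/2)))"
  proof -
    have "C * (Gamma k / (1/2 - s) powr k) = 1 / (2 powr k * (1/2 - s) powr k)"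
      using k s Gamma_real_pos[OF k] by (simp add: C_def field_simps less_imp_neq[symmetric])
    also have "\<dots> = 1 / ((1 - 2 * s) powr k)"
      using s by (simp add: powr_mult[symmetric] algebra_simps)
    also have "\<dots> = (1 - 2 * s) powr (-(d/2))"
      using s by (simp add: k_def powr_minus_divide)
    finally show ?thesis using C k s by (simp add: ennreal_mult[symmetric] Gamma_real_pos)
  qed
  finally show ?thesis .
qed

lemma chi2_mean:
  fixes d :: real assumes d: "d > 0"
  shows "(\<integral>\<^sup>+x. ennreal (chi2_density d x) * ennreal x \<partial>lborel) = ennreal d"
proof -
  define k where "k = d/2"
  have k: "k > 0" using d by (simp add: k_def)
  define C where "C = 1 / (2 powr k * Gamma k)"
  have C: "C > 0" using k by (simp add: C_def Gamma_real_pos)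
  have "(\<lambda>x. ennreal (chi2_density d x) * ennreal x) = (\<lambda>x. ennreal C * ennreal (indicator {0<..} x * x powr ((k+1)-1) * exp (- ((1/2) * x))))"
  proof (rule ext)
    fix x :: real
    show "ennreal (chi2_density d x) * ennreal x = ennreal C * ennreal (indicator {0<..} x * x powr ((k+1)-1) * exp (- ((1/2) * x)))"
    proof (cases "x > 0")
      case True
      have "x powr (k - 1) * x = x powr k" using True by (simp add: powr_diff)
      then have eq: "chi2_density d x * x = C * (x powr ((k+1)-1) * exp (- ((1/2) * x)))"
        using True unfolding chi2_density_def C_def k_def
        by (simp add: field_simps)
      have "ennreal (chi2_density d x) * ennreal x = ennreal (chi2_density d x * x)"
        using chi2_nonneg[OF d] True by (simp add: ennreal_mult)
      then show ?thesis using True C eq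
        by (simp add: ennreal_mult[symmetric] indicator_def)
    qed (simp add: chi2_density_def)
  qed
  then have "(\<integral>\<^sup>+x. ennreal (chi2_density d x) * ennreal x \<partial>lborel)
     = ennreal C * ennreal (Gamma (k+1) / (1/2) powr (k+1))"
    using gamma_nn[of "k+1" "1/2"] k by (simp add: nn_integral_cmult)
  also have "\<dots> = ennreal d"
  proof -
    have g: "Gamma (k+1) = k * Gamma k" using k Gamma_eq_zero_iff[of k] Gamma_real_pos[OF k] by (intro Gamma_plus1) auto
    have p: "(1/2::real) powr (k+1) = 1 / (2 powr k * 2)" by (simp add: powr_divide powr_add)
    have "C * (Gamma (k+1) / (1/2) powr (k+1)) = 2 * k"
      unfolding g p C_def using Gamma_real_pos[OF k] by (simp add: field_simps)
    then have "C * (Gamma (k+1) / (1/2) powr (k+1)) = d" by (simp add: k_def)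
    then show ?thesis using C k by (simp add: ennreal_mult[symmetric] Gamma_real_pos)
  qed
  finally show ?thesis .
qed

lemma log_pos_side:
  fixes y :: real assumes "0 \<le> y" "y < 1"
  shows "- ln (1 - y) - y \<le> y^2 / (2 * (1 - y))"
proof -
  define h where "h = (\<lambda>w::real. 1 / (2 * w) - w / 2 + ln w)"
  have w: "1 - y \<le> 1" "0 < 1 - y" using assms by auto
  have "h 1 \<le> h (1 - y)"
  proof (rule DERIV_nonpos_imp_nonincreasing[OF w(1)])
    fix x assume x: "1 - y \<le> x" "x \<le> 1"
    then have x0: "x > 0" using w by linarith
    have "(h has_real_derivative (- ((1 - x)^2 / (2 * x^2)))) (at x)"
      unfolding h_def using x0
      by (auto intro!: derivative_eq_intros simp: field_simps power2_eq_square)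
    then show "\<exists>d. (h has_real_derivative d) (at x) \<and> d \<le> 0" using x0 by fastforce
  qed
  moreover have "h (1 - y) = y^2 / (2 * (1 - y)) + y + ln (1 - y)"
    using w unfolding h_def by (simp add: field_simps power2_eq_square)
  ultimately show ?thesis by (simp add: h_def)
qed

lemma log_neg_side:
  fixes y :: real assumes "0 \<le> y" "y < 1"
  shows "- ln (1 + y) + y \<le> y^2 / (2 * (1 - y))"
proof -
  define f where "f = (\<lambda>y::real. y^2 / 2 - y + ln (1 + y))"
  have "f 0 \<le> f y"
  proof (rule DERIV_nonneg_imp_nondecreasing[OF assms(1)])
    fix x assume x: "0 \<le> x" "x \<le> y"
    have "(f has_real_derivative (x^2 / (1 + x))) (at x)"
      unfolding f_def using x
      by (auto intro!: derivative_eq_intros simp: field_simps power2_eq_square)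
    then show "\<exists>d. (f has_real_derivative d) (at x) \<and> 0 \<le> d" using x by auto
  qed
  then have "- ln (1 + y) + y \<le> y^2 / 2" by (simp add: f_def)
  also have "\<dots> \<le> y^2 / (2 * (1 - y))"
    using assms by (intro divide_left_mono) (auto intro!: mult_pos_pos)
  finally show ?thesis .
qed

lemma log_ineq:
  fixes x :: real assumes "\<bar>x\<bar> < 1"
  shows "- ln (1 - x) - x \<le> x^2 / (2 * (1 - \<bar>x\<bar>))"
proof (cases "x \<ge> 0")
  case True then show ?thesis using log_pos_side[of x] assms by simp
next
  case False then show ?thesis using log_neg_side[of "-x"] assms by simp
qed

lemma sg_chi:
  assumes P: "prob_space M" and a: "\<alpha> > 0" and j: "j \<ge> (1::nat)"
    and D: "distributed M lborel (\<lambda>\<omega>. (2/\<alpha>) * (b \<omega>)^2) (chi2_density (2 * real j / \<alpha>))"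
  shows "sub_gamma M (\<lambda>\<omega>. ((b \<omega>)^2 - real j) / sqrt (real j)) \<alpha> (\<alpha> / sqrt (real j))"
proof -
  interpret prob_space M by fact
  define Y where "Y = (\<lambda>\<omega>. (2/\<alpha>) * (b \<omega>)^2)"
  define d where "d = 2 * real j / \<alpha>"
  define q where "q = sqrt (real j)"
  have d: "d > 0" using a j by (simp add: d_def)
  have q: "q > 0" "q^2 = real j" "q * q = real j" using j by (simp_all add: q_def)
  have DY: "distributed M lborel Y (chi2_density d)" using D by (simp add: Y_def d_def)
  have mY[measurable]: "Y \<in> borel_measurable M" using DY by (auto dest: distributed_measurable)
  have Y0: "Y \<omega> \<ge> 0" for \<omega> using a by (simp add: Y_def)
  have cY: "((b \<omega>)^2 - real j) / sqrt (real j) = ((\<alpha>/2) * Y \<omega> - real j) / q" for \<omega>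
    using a by (simp add: Y_def q_def)
  have nnY: "(\<integral>\<^sup>+\<omega>. ennreal (Y \<omega>) \<partial>M) = ennreal d"
    using distributed_nn_integral[OF DY, of "\<lambda>y. ennreal y"] chi2_mean[OF d] by simp
  have intY: "integrable M Y"
    by (rule integrableI_nn_integral_finite[OF mY _ nnY]) (simp add: Y0)
  have EY: "(\<integral>\<omega>. Y \<omega> \<partial>M) = d"
    using integral_eq_nn_integral[OF mY] nnY Y0 d by simp
  have eqf: "(\<lambda>\<omega>. ((b \<omega>)^2 - real j) / sqrt (real j)) = (\<lambda>\<omega>. ((\<alpha>/2) * Y \<omega> - real j) / q)"
    using cY by auto
  have int: "integrable M (\<lambda>\<omega>. ((\<alpha>/2) * Y \<omega> - real j) / q)" using intY by auto
  have mean: "(\<integral>\<omega>. ((\<alpha>/2) * Y \<omega> - real j) / q \<partial>M) = 0"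
    using intY EY a by (simp add: d_def prob_space)
  have mgf: "(\<integral>\<^sup>+\<omega>. ennreal (exp (t * (((\<alpha>/2) * Y \<omega> - real j) / q))) \<partial>M)
      \<le> ennreal (exp (t^2 * \<alpha> / (2 * (1 - \<alpha> / q * \<bar>t\<bar>))))"
    if t: "\<alpha> / q = 0 \<or> \<bar>t\<bar> < 1 / (\<alpha> / q)" for t
  proof -
    define x where "x = t * \<alpha> / q"
    define k where "k = real j / \<alpha>"
    have k: "k > 0" using a j by (simp add: k_def)
    have ax: "\<bar>x\<bar> = \<alpha> / q * \<bar>t\<bar>" using a q by (simp add: x_def abs_mult)
    have x1: "\<bar>x\<bar> < 1" using t a q by (auto simp: ax pos_less_divide_eq field_simps)
    have s: "x / 2 < 1/2" using x1 by auto
    have kx: "k * x = t * q" using a q by (simp add: k_def x_def field_simps)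
    have dk: "d / 2 = k" by (simp add: d_def k_def)
    have "(\<integral>\<^sup>+\<omega>. ennreal (exp (t * (((\<alpha>/2) * Y \<omega> - real j) / q))) \<partial>M)
        = (\<integral>\<^sup>+\<omega>. ennreal (exp ((x/2) * Y \<omega>)) * ennreal (exp (- (t * q))) \<partial>M)"
    proof (intro nn_integral_cong)
      fix \<omega>
      have jq: "real j / q = q" using q by (simp add: divide_eq_eq)
      have "t * (((\<alpha>/2) * Y \<omega> - real j) / q) = t*\<alpha>*Y \<omega>/(2*q) - t * (real j / q)"
        using q by (simp add: field_simps)
      also have "\<dots> = (x/2) * Y \<omega> + (- (t * q))" by (simp add: jq x_def)
      finally have e: "t * (((\<alpha>/2) * Y \<omega> - real j) / q) = (x/2) * Y \<omega> + (- (t * q))" .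
      show "ennreal (exp (t * (((\<alpha>/2) * Y \<omega> - real j) / q))) = ennreal (exp ((x/2) * Y \<omega>)) * ennreal (exp (- (t * q)))"
        by (simp only: e exp_add ennreal_mult[OF exp_ge_zero exp_ge_zero])
    qed
    also have "\<dots> = (\<integral>\<^sup>+\<omega>. ennreal (exp ((x/2) * Y \<omega>)) \<partial>M) * ennreal (exp (- (t * q)))"
      by (rule nn_integral_multc) auto
    also have "(\<integral>\<^sup>+\<omega>. ennreal (exp ((x/2) * Y \<omega>)) \<partial>M) = ennreal ((1 - 2 * (x/2)) powr (-(d/2)))"
      using distributed_nn_integral[OF DY, of "\<lambda>y. ennreal (exp ((x/2) * y))"] chi2_mgf[OF d s] by simp
    also have "ennreal ((1 - 2 * (x/2)) powr (-(d/2))) * ennreal (exp (- (t * q)))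
        = ennreal (exp (k * (- ln (1 - x) - x)))"
    proof -
      have "(1 - 2 * (x/2)) powr (-(d/2)) = exp (- k * ln (1 - x))"
        using x1 by (simp add: dk powr_def)
      then have "(1 - 2 * (x/2)) powr (-(d/2)) * exp (- (t * q)) = exp (k * (- ln (1 - x) - x))"
        using kx by (simp add: exp_add[symmetric] algebra_simps)
      then show ?thesis by (simp add: ennreal_mult[symmetric])
    qed
    also have "\<dots> \<le> ennreal (exp (k * (x^2 / (2 * (1 - \<bar>x\<bar>)))))"
      using mult_left_mono[OF log_ineq[OF x1], of k] k by (intro ennreal_leI) simp
    also have "k * (x^2 / (2 * (1 - \<bar>x\<bar>))) = t^2 * \<alpha> / (2 * (1 - \<alpha> / q * \<bar>t\<bar>))"
    proof -
      have "k * x^2 = (real j / q^2) * t^2 * \<alpha>" using a q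
        by (simp add: k_def x_def power_divide power_mult_distrib power2_eq_square)
      also have "\<dots> = t^2 * \<alpha>" using q j by simp
      finally have "k * x^2 = t^2 * \<alpha>" .
      then show ?thesis by (simp only: ax[symmetric] times_divide_eq_right)
    qed
    finally show ?thesis .
  qed
  show ?thesis unfolding eqf unfolding sub_gamma_def q_def[symmetric] using a q(1) int mean mgf by (auto intro!: divide_nonneg_pos)
qed

lemma L_cong:
  "(\<And>j. 3 \<le> j \<Longrightarrow> j \<le> n \<Longrightarrow> a j \<omega> = a' j \<omega>') \<Longrightarrow> (\<And>j. 2 \<le> j \<Longrightarrow> j < n \<Longrightarrow> b j \<omega> = b' j \<omega>')
   \<Longrightarrow> L_var N \<theta> a b n \<omega> = L_var N \<theta> a' b' n \<omega>'"
proof (induction n)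
  case 0 then show ?case by simp
next
  case (Suc n)
  show ?case
  proof (cases "Suc n \<le> 2")
    case False
    have "L_var N \<theta> a b n \<omega> = L_var N \<theta> a' b' n \<omega>'" using Suc by auto
    moreover have "a (Suc n) \<omega> = a' (Suc n) \<omega>'" "b n \<omega> = b' n \<omega>'" using Suc False by auto
    ultimately show ?thesis using False by (simp add: xi_var_def c_var_def)
  qed simp
qed

lemma L_meas:
  "(\<And>j. 3 \<le> j \<Longrightarrow> j \<le> n \<Longrightarrow> a j \<in> borel_measurable M') \<Longrightarrow> (\<And>j. 2 \<le> j \<Longrightarrow> j < n \<Longrightarrow> b j \<in> borel_measurable M')
   \<Longrightarrow> L_var N \<theta> a b n \<in> borel_measurable M'"
proof (induction n)
  case 0 then show ?case by simp
next
  case (Suc n)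
  show ?case
  proof (cases "Suc n \<le> 2")
    case False
    have [measurable]: "L_var N \<theta> a b n \<in> borel_measurable M'" using Suc by auto
    have [measurable]: "a (Suc n) \<in> borel_measurable M'" "b n \<in> borel_measurable M'" using Suc False by auto
    show ?thesis using False by (simp add: xi_var_def c_var_def)
  qed simp
qed

lemma indep_blocks:
  assumes P: "prob_space M" and ind: "prob_space.indep_vars M (\<lambda>_. borel) X I"
    and AB: "A \<inter> B = {}" "A \<subseteq> I" "B \<subseteq> I"
    and F: "F \<in> borel_measurable (PiM A (\<lambda>_. borel))" and G: "G \<in> borel_measurable (PiM B (\<lambda>_. borel))"
    and f: "\<And>\<omega>. F (restrict (\<lambda>i. X i \<omega>) A) = f \<omega>" and g: "\<And>\<omega>. G (restrict (\<lambda>i. X i \<omega>) B) = g \<omega>"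
  shows "prob_space.indep_var M borel f borel g"
proof -
  interpret prob_space M by fact
  have "indep_var borel (F \<circ> (\<lambda>\<omega>. restrict (\<lambda>i. X i \<omega>) A)) borel (G \<circ> (\<lambda>\<omega>. restrict (\<lambda>i. X i \<omega>) B))"
    by (rule indep_var_compose[OF indep_var_restrict[OF ind AB] F G])
  moreover have "F \<circ> (\<lambda>\<omega>. restrict (\<lambda>i. X i \<omega>) A) = f" "G \<circ> (\<lambda>\<omega>. restrict (\<lambda>i. X i \<omega>) B) = g"
    using f g by (auto simp: fun_eq_iff)
  ultimately show ?thesis by simp
qed

lemma V_alg:
  fixes s s' :: real assumes s: "0 < s" "s \<le> s'" "s' \<le> 1"
  shows "1/(1+s)^2 + ((1-s)/(1+s))/(1+s')^2 + ((1-s)/(1+s))^2/(2 * s') \<le> 1/(2 * s)"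
proof -
  define w where "w = 1 + s"
  have w: "w > 0" "w + (1 - s) = 2" "w^2 - (1-s)^2 = 4 * s" using s by (simp_all add: w_def power2_eq_square algebra_simps)
  define g where "g = (1-s)/w"
  have g0: "g \<ge> 0" using s w by (simp add: g_def)
  have 1: "g/(1+s')^2 \<le> g/w^2"
    using s g0 w unfolding w_def by (intro divide_left_mono power_mono mult_pos_pos) auto
  have 2: "g^2/(2 * s') \<le> g^2/(2 * s)"
    using s by (intro divide_left_mono) auto
  have "1/w^2 + g/w^2 = (w + (1 - s))/w^3"
    using w(1) by (simp add: g_def field_simps power2_eq_square power3_eq_cube)
  then have 3: "1/w^2 + g/w^2 = 2/w^3" by (simp only: w(2))
  have g2: "g^2 = (1-s)^2/w^2" by (simp add: g_def power_divide)
  have "1/(2 * s) - g^2/(2 * s) = w^2/(w^2*(2 * s)) - (1-s)^2/(w^2*(2 * s))"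
    using w(1) by (simp add: g2 divide_divide_eq_left)
  also have "\<dots> = (w^2 - (1-s)^2)/(w^2*(2 * s))" by (simp only: diff_divide_distrib)
  also have "\<dots> = 2/w^2" using w(1) s by (simp only: w(3)) (simp add: field_simps)
  finally have 4: "1/(2 * s) - g^2/(2 * s) = 2/w^2" .
  have 5: "2/w^3 \<le> 2/w^2"
    using s w unfolding w_def by (intro divide_left_mono) (auto simp: power2_eq_square power3_eq_cube)
  show ?thesis using 1 2 3 4 5 unfolding g_def w_def by linarith
qed

lemma V_main:
  fixes s s' K sN \<alpha> :: real
  assumes K: "K = sN^2" and sN: "sN > 0" and a: "\<alpha> > 0" and s: "0 < s" "s \<le> s'" "s' \<le> 1"
  shows "(1/(sN*(1+s)))^2 * \<alpha> + (sqrt ((1-s)/(1+s))/(sN*(1+s')))^2 * \<alpha>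
          + ((1-s)/(1+s))^2 * (\<alpha>/(2*K* s')) \<le> \<alpha>/(2*K* s)"
proof -
  define g where "g = (1-s)/(1+s)"
  have g0: "g \<ge> 0" using s by (simp add: g_def)
  have K0: "K > 0" using K sN by simp
  have t1: "(1/(sN*(1+s)))^2 * \<alpha> = \<alpha>/K * (1/(1+s)^2)"
    using K by (simp add: power_divide power_mult_distrib)
  have t2: "(sqrt g/(sN*(1+s')))^2 * \<alpha> = \<alpha>/K * (g/(1+s')^2)"
    using K g0 by (simp add: power_divide power_mult_distrib)
  have t3: "g^2 * (\<alpha>/(2*K* s')) = \<alpha>/K * (g^2/(2 * s'))"
    by (simp add: field_simps)
  have t4: "\<alpha>/(2*K* s) = \<alpha>/K * (1/(2 * s))" by (simp add: field_simps)
  have "\<alpha>/K * (1/(1+s)^2 + g/(1+s')^2 + g^2/(2 * s')) \<le> \<alpha>/K * (1/(2 * s))"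
    using V_alg[OF s] a K0 unfolding g_def by (intro mult_left_mono) auto
  then show ?thesis unfolding g_def[symmetric] t1 t2 t3 t4 by (simp add: distrib_left)
qed

lemma U1_alg:
  fixes s s' K p \<alpha> sN :: real
  assumes K: "K = sN^2" and sN: "sN > 0" and s: "0 < s" "s \<le> s'" "s < 1" and s2: "s^2 = 1 - p/K"
    and p: "p > 0" and a: "\<alpha> > 0"
  shows "\<bar>sqrt ((1-s)/(1+s)) / (sN * (1+s'))\<bar> * (\<alpha> / sqrt p) \<le> \<alpha> / (K * (1+s)^2)"
proof -
  have K0: "K > 0" using K sN by simp
  have "(1-s)*(1+s) = p/K" using s2 by (simp add: power2_eq_square algebra_simps)
  note pk = this
  have "(1-s)/(1+s) = ((1-s)*(1+s))/((1+s)*(1+s))" using s by simp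
  also have "\<dots> = (p/K)/((1+s)*(1+s))" using pk by simp
  also have "\<dots> = p/(sN * (1+s))^2" using K by (simp add: power2_eq_square mult_ac)
  finally have h: "(1-s)/(1+s) = p/(sN * (1+s))^2" .
  have sq: "sqrt ((1-s)/(1+s)) = sqrt p / (sN * (1+s))"
    unfolding h using sN s by (simp add: real_sqrt_divide)
  have "\<bar>sqrt ((1-s)/(1+s)) / (sN * (1+s'))\<bar> * (\<alpha> / sqrt p) = \<alpha> / (K * ((1+s) * (1+s')))"
    unfolding sq using sN s p K by (simp add: field_simps power2_eq_square)
  also have "\<dots> \<le> \<alpha> / (K * (1+s)^2)"
    using a K0 s by (intro divide_left_mono mult_left_mono mult_pos_pos) (auto simp: power2_eq_square)
  finally show ?thesis .
qed

lemma U2_alg: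
  fixes s s' K \<alpha> :: real
  assumes K: "K > 0" and s: "0 < s" "s \<le> s'" "s \<le> 1" and a: "\<alpha> > 0"
  shows "\<bar>(1-s)/(1+s)\<bar> * (\<alpha> / (K * (1+s')^2)) \<le> \<alpha> / (K * (1+s)^2)"
proof -
  have g: "0 \<le> (1-s)/(1+s)" "(1-s)/(1+s) \<le> 1" using s by auto
  have "\<bar>(1-s)/(1+s)\<bar> * (\<alpha> / (K * (1+s')^2)) \<le> 1 * (\<alpha> / (K * (1+s')^2))"
    unfolding abs_of_nonneg[OF g(1)] using g a K by (intro mult_right_mono) auto
  also have "\<dots> \<le> \<alpha> / (K * (1+s)^2)"
    using a K s by (simp, intro divide_left_mono mult_left_mono power_mono mult_pos_pos) auto
  finally show ?thesis .
qed

theorem lemma5: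
  fixes M :: "'a measure" and a b :: "nat \<Rightarrow> 'a \<Rightarrow> real"
    and \<alpha> \<theta> :: real and N i :: nat
  assumes "prob_space M"
    and "\<alpha> > 0" and "\<theta> > 1"
    and "prob_space.indep_vars M (\<lambda>_. borel)
           (\<lambda>k. case k of Inl j \<Rightarrow> a j | Inr j \<Rightarrow> b j) ({1..N} <+> {1..N-1})"
    and "\<And>j. j \<in> {1..N} \<Longrightarrow> distributed M lborel (a j) (normal_density 0 (sqrt \<alpha>))"
    and "\<And>j. j \<in> {1..N-1} \<Longrightarrow> AE \<omega> in M. b j \<omega> \<ge> 0"
    and "\<And>j. j \<in> {1..N-1} \<Longrightarrow>
           distributed M lborel (\<lambda>\<omega>. (2 / \<alpha>) * (b j \<omega>)^2) (chi2_density (2 * real j / \<alpha>))"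
    and "3 \<le> i" and "i \<le> N"
  shows "sub_gamma M (L_var N \<theta> a b i)
           (\<alpha> / (2 * real N * \<theta>^2 * (r_coef N \<theta> i - 1)))
           (\<alpha> / (real N * \<theta>^2 * (r_coef N \<theta> i)^2))"
proof -
  note P = assms(1) and a = assms(2) and th = assms(3) and ind = assms(4)
    and Da = assms(5) and Db = assms(7)
  interpret prob_space M by fact
  define X where "X = (\<lambda>k. case k of Inl j \<Rightarrow> a j | Inr (j::nat) \<Rightarrow> b j)"
  define I where "I = ({1..N} <+> {1..N-1})"
  have ind': "indep_vars (\<lambda>_. borel) X I" using ind by (simp add: X_def I_def)
  define K where "K = real N * \<theta>^2"
  define sN where "sN = sqrt (real N) * \<theta>"
  define S where "S n = sqrt (1 - real (n - 1) / K)" for n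
  have N3: "N \<ge> 3" using assms(8,9) by simp
  have th2: "\<theta>^2 > 1" using th by (simp add: one_less_power)
  have KN: "K \<ge> real N" using th2 N3 by (simp add: K_def)
  have K0: "K > 0" using KN N3 by simp
  have KsN: "K = sN^2" by (simp add: K_def sN_def power_mult_distrib)
  have sN0: "sN > 0" using N3 th by (simp add: sN_def)
  have rS: "r_coef N \<theta> n = 1 + S n" for n by (simp add: r_coef_def S_def K_def)
  have mS: "m_coef N \<theta> n = 1 - S n" for n by (simp add: m_coef_def S_def K_def)
  have gS: "gamma_coef N \<theta> n = (1 - S n) / (1 + S n)" for n by (simp add: gamma_coef_def rS mS)
  have Sbnd: "0 < S n" "S n \<le> 1" "(S n)^2 = 1 - real (n - 1) / K" if "n \<le> N" for n
  proof -
    have "real (n - 1) < K" using that KN N3 by linarith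
    then have q: "real (n - 1) / K < 1" using K0 by simp
    have "real (n - 1) / K \<ge> 0" using K0 by simp
    then show "0 < S n" "S n \<le> 1" "(S n)^2 = 1 - real (n - 1) / K" using q by (auto simp: S_def)
  qed
  have Smono: "S n \<le> S n'" if "n' \<le> n" for n n'
    unfolding S_def using that K0 by (intro real_sqrt_le_mono diff_left_mono divide_right_mono) auto
  define VL where "VL n = \<alpha> / (2 * K * S n)" for n
  define UL where "UL n = \<alpha> / (K * (1 + S n)^2)" for n
  define AA where "AA = (\<lambda>j (f :: nat + nat \<Rightarrow> real). f (Inl j))"
  define BB where "BB = (\<lambda>j (f :: nat + nat \<Rightarrow> real). f (Inr j))"
  have claim: "sub_gamma M (L_var N \<theta> a b n) (VL n) (UL n)" if "2 \<le> n" "n \<le> N" for n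
    using that
  proof (induction n)
    case 0 then show ?case by simp
  next
    case (Suc m)
    let ?n = "Suc m"
    show ?case
    proof (cases "m \<ge> 2")
      case False
      then have "?n = 2" using Suc by simp
      then show ?thesis
        using sg_zero[OF P] Sbnd[of 2] N3 K0 a
        by (simp add: VL_def UL_def eval_nat_numeral)
    next
      case m2: True
      have mN: "m \<le> N" "Suc m \<le> N" using Suc by auto
      have IH: "sub_gamma M (L_var N \<theta> a b m) (VL m) (UL m)" using Suc m2 by simp
      define s where "s = S ?n"
      define s' where "s' = S m"
      have sq: "(S ?n)^2 < 1" using Sbnd(3)[OF mN(2)] K0 m2 by simp
      have slt: "S ?n < 1"
      proof (rule ccontr)
        assume "\<not> S ?n < 1"
        then have "1 \<le> S ?n" by simp
        then have "1 \<le> (S ?n)^2" by (rule one_le_power)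
        then show False using sq by simp
      qed
      have s: "0 < s" "s \<le> s'" "s' \<le> 1" "s < 1" "s^2 = 1 - real m / K"
        using Sbnd[OF mN(1)] Sbnd[OF mN(2)] Smono[of m "Suc m"] m2 slt
        by (auto simp: s_def s'_def)
      define c1 where "c1 = 1 / (sN * (1 + s))"
      define c2 where "c2 = sqrt ((1 - s) / (1 + s)) / (sN * (1 + s'))"
      define g where "g = (1 - s) / (1 + s)"
      have xi_eq: "xi_var N \<theta> a b ?n = (\<lambda>\<omega>. c1 * a ?n \<omega> + c2 * c_var b m \<omega>)"
        by (rule ext) (simp add: xi_var_def rS mS c1_def c2_def s_def s'_def sN_def)
      have sga: "sub_gamma M (a ?n) \<alpha> 0" using sg_normal[OF P a Da[of ?n]] mN by simp
      have c_eq: "c_var b m = (\<lambda>\<omega>. ((b m \<omega>)^2 - real m) / sqrt (real m))"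
        by (rule ext) (simp add: c_var_def)
      have sgc: "sub_gamma M (c_var b m) \<alpha> (\<alpha> / sqrt (real m))"
        unfolding c_eq using sg_chi[OF P a _ Db[of m]] m2 mN by simp
      have ind_ac: "indep_var borel (a ?n) borel (c_var b m)"
      proof (rule indep_blocks[OF P ind', of "{Inl ?n}" "{Inr m}" "\<lambda>f. f (Inl ?n)" "\<lambda>f. ((f (Inr m))^2 - real m) / sqrt (real m)"])
        show "{Inl ?n} \<inter> {Inr m} = {}" by simp
        show "{Inl ?n} \<subseteq> I" "{Inr m} \<subseteq> I" using mN m2 by (auto simp: I_def)
        show "(\<lambda>f. f (Inl ?n)) \<in> borel_measurable (Pi\<^sub>M {Inl ?n} (\<lambda>_. borel))" by measurable
        show "(\<lambda>f. ((f (Inr m))^2 - real m) / sqrt (real m)) \<in> borel_measurable (Pi\<^sub>M {Inr m} (\<lambda>_. borel))" by measurable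
      qed (auto simp: X_def c_var_def)
      have sgxi: "sub_gamma M (xi_var N \<theta> a b ?n) (c1^2 * \<alpha> + c2^2 * \<alpha>) (UL ?n)"
        unfolding xi_eq
      proof (rule sg_comb[OF P sga sgc ind_ac])
        show "c1^2 * \<alpha> + c2^2 * \<alpha> > 0" using a s sN0 by (simp add: c1_def add_pos_nonneg)
        show "\<bar>c1\<bar> * 0 \<le> UL ?n" using a K0 by (simp add: UL_def s_def[symmetric])
        show "\<bar>c2\<bar> * (\<alpha> / sqrt (real m)) \<le> UL ?n"
          unfolding c2_def UL_def s_def[symmetric]
          by (rule U1_alg[OF KsN sN0 s(1,2,4) s(5)]) (use m2 a in auto)
      qed simp
      have ind_xL: "indep_var borel (xi_var N \<theta> a b ?n) borel (L_var N \<theta> a b m)"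
      proof (rule indep_blocks[OF P ind', of "{Inl ?n, Inr m}" "Inl ` {1..m} \<union> Inr ` {1..m-1}"
            "xi_var N \<theta> AA BB ?n" "L_var N \<theta> AA BB m"])
        show "{Inl ?n, Inr m} \<inter> (Inl ` {1..m} \<union> Inr ` {1..m-1}) = {}" by auto
        show "{Inl ?n, Inr m} \<subseteq> I" "Inl ` {1..m} \<union> Inr ` {1..m-1} \<subseteq> I" using mN m2 by (auto simp: I_def)
        show "xi_var N \<theta> AA BB ?n \<in> borel_measurable (Pi\<^sub>M {Inl ?n, Inr m} (\<lambda>_. borel))"
          unfolding xi_var_def c_var_def AA_def BB_def by measurable
        show "L_var N \<theta> AA BB m \<in> borel_measurable (Pi\<^sub>M (Inl ` {1..m} \<union> Inr ` {1..m-1}) (\<lambda>_. borel))"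
          by (rule L_meas) (auto simp: AA_def BB_def)
        show "xi_var N \<theta> AA BB ?n (restrict (\<lambda>i. X i \<omega>) {Inl ?n, Inr m}) = xi_var N \<theta> a b ?n \<omega>" for \<omega>
          by (simp add: xi_var_def c_var_def AA_def BB_def X_def)
        show "L_var N \<theta> AA BB m (restrict (\<lambda>i. X i \<omega>) (Inl ` {1..m} \<union> Inr ` {1..m-1})) = L_var N \<theta> a b m \<omega>" for \<omega>
          by (rule L_cong) (auto simp: AA_def BB_def X_def)
      qed
      have L_eq: "L_var N \<theta> a b ?n = (\<lambda>\<omega>. 1 * xi_var N \<theta> a b ?n \<omega> + g * L_var N \<theta> a b m \<omega>)"
        using m2 by (simp add: gS g_def s_def)
      show ?thesis
        unfolding L_eq
      proof (rule sg_comb[OF P sgxi Suc.IH ind_xL])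
        show "1^2 * (c1^2 * \<alpha> + c2^2 * \<alpha>) + g^2 * VL m \<le> VL ?n"
          using V_main[OF KsN sN0 a s(1,2,3)]
          by (simp add: c1_def c2_def g_def VL_def s_def[symmetric] s'_def[symmetric])
        show "VL ?n > 0" using a K0 s by (simp add: VL_def s_def[symmetric])
        show "\<bar>g\<bar> * UL m \<le> UL ?n"
          unfolding g_def UL_def s_def[symmetric] s'_def[symmetric]
          by (rule U2_alg[OF K0 s(1,2)]) (use s a in auto)
      qed (use m2 mN in auto)
    qed
  qed
  have "sub_gamma M (L_var N \<theta> a b i) (VL i) (UL i)" using claim assms(8,9) by simp
  moreover have "VL i = \<alpha> / (2 * real N * \<theta>^2 * (r_coef N \<theta> i - 1))"
    by (simp add: VL_def rS K_def mult.assoc)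
  moreover have "UL i = \<alpha> / (real N * \<theta>^2 * (r_coef N \<theta> i)^2)"
    by (simp add: UL_def rS K_def mult.assoc)
  ultimately show ?thesis by simp
qed


end
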